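(* Let $\Gamma$ be a semisimple graph structure with transition matrix $M$ of spectral radius $\lambda>1$ and initial vertex $v_0$ of large growth. Let $\rho_i=\lim_n e_i^TM^n\mathbf 1/\lambda^n$, $u_i=\lim_n e_0^TM^ne_i/\lambda^n$, and let $\mathbb P$ be the Markov measure on infinite paths with initial probabilities $\pi_i=u_i\rho_i/\rho_0$ and transition probability $\rho_j/(\lambda\rho_i)$ on each edge from $v_i$ to $v_j$; let $\mathbb P_m$ be the law of the first $m$ edges. For each $n$, choose a path $\gamma$ of length $n$ starting at $v_0$ uniformly at random and let $\tilde\lambda_n$ be the law of its subpath from position $\lfloor\log n\rfloor$ to position $n-\lfloor\log n\rfloor$. Then $\|\mathbb P_{n-2\lfloor\log n\rfloor}-\tilde\lambda_n\|_{TV}\to0$ as $n\to\infty$.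
   Context: $\Gamma$ is a finite directed graph with transition matrix $M$ ($M_{ij}$ the number of edges $v_i\to v_j$), so $e_i^TM^ne_j$ counts paths of length $n$ from $v_i$ to $v_j$; $\mathbf 1$ is the all-ones vector. $M$ is semisimple if every eigenvalue of modulus $\lambda$ has equal geometric and algebraic multiplicity and $\lambda$ is the only eigenvalue of maximal modulus (so $\lim M^n/\lambda^n$ exists). A vertex $v$ has large growth if the number of paths of length $n$ starting at $v$ grows like $\lambda^{n+o(n)}$. *)

theory Defs
  imports "Jordan_Normal_Form.Spectral_Radius"
          "Jordan_Normal_Form.Jordan_Normal_Form_Uniqueness"
          "HOL-Library.Landau_Symbols"
begin

definition graph_ok :: "nat \<Rightarrow> 'e set \<Rightarrow> ('e \<Rightarrow> nat) \<Rightarrow> ('e \<Rightarrow> nat) \<Rightarrow> bool" where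
  "graph_ok N E src tgt \<longleftrightarrow> finite E \<and> (\<forall>e\<in>E. src e < N \<and> tgt e < N)"

definition trans_mat :: "nat \<Rightarrow> 'e set \<Rightarrow> ('e \<Rightarrow> nat) \<Rightarrow> ('e \<Rightarrow> nat) \<Rightarrow> complex mat" where
  "trans_mat N E src tgt =
     mat N N (\<lambda>(i,j). of_nat (card {e\<in>E. src e = i \<and> tgt e = j}))"

fun is_walk_from :: "('e \<Rightarrow> nat) \<Rightarrow> ('e \<Rightarrow> nat) \<Rightarrow> nat \<Rightarrow> 'e list \<Rightarrow> bool" where
  "is_walk_from src tgt v [] = True"
| "is_walk_from src tgt v (e # es) = (src e = v \<and> is_walk_from src tgt (tgt e) es)"

definition paths_from :: "'e set \<Rightarrow> ('e \<Rightarrow> nat) \<Rightarrow> ('e \<Rightarrow> nat) \<Rightarrow> nat \<Rightarrow> nat \<Rightarrow> 'e list set" where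
  "paths_from E src tgt v n =
     {es. length es = n \<and> set es \<subseteq> E \<and> is_walk_from src tgt v es}"

definition semisimple :: "complex mat \<Rightarrow> bool" where
  "semisimple A \<longleftrightarrow>
     (\<forall>ev. eigenvalue A ev \<and> cmod ev = spectral_radius A \<longrightarrow>
            dim_gen_eigenspace A ev 1 = Polynomial.order ev (char_poly A)) \<and>
     (\<forall>ev. eigenvalue A ev \<and> cmod ev = spectral_radius A \<longrightarrow>
            ev = complex_of_real (spectral_radius A))"

definition large_growth :: "'e set \<Rightarrow> ('e \<Rightarrow> nat) \<Rightarrow> ('e \<Rightarrow> nat) \<Rightarrow> real \<Rightarrow> nat \<Rightarrow> bool" where
  "large_growth E src tgt lam v \<longleftrightarrow>
     (\<exists>f :: nat \<Rightarrow> real. f \<in> o(\<lambda>n. real n) \<and>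
        (\<forall>n. real (card (paths_from E src tgt v n)) = lam powr (real n + f n)))"

fun markov_prob_from :: "('e \<Rightarrow> nat) \<Rightarrow> ('e \<Rightarrow> nat) \<Rightarrow> ('e \<Rightarrow> real) \<Rightarrow> nat \<Rightarrow> 'e list \<Rightarrow> real" where
  "markov_prob_from src tgt p v [] = 1"
| "markov_prob_from src tgt p v (e # es) =
     (if src e = v then p e * markov_prob_from src tgt p (tgt e) es else 0)"

definition markov_prob :: "'e set \<Rightarrow> ('e \<Rightarrow> nat) \<Rightarrow> ('e \<Rightarrow> nat) \<Rightarrow> (nat \<Rightarrow> real) \<Rightarrow> ('e \<Rightarrow> real)
     \<Rightarrow> 'e list \<Rightarrow> real" where
  "markov_prob E src tgt \<pi> p es =
     (if set es \<subseteq> E then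
        (case es of [] \<Rightarrow> 1 | e # _ \<Rightarrow> \<pi> (src e) * markov_prob_from src tgt p (src e) es)
      else 0)"

definition tv_dist :: "'a set \<Rightarrow> ('a \<Rightarrow> real) \<Rightarrow> ('a \<Rightarrow> real) \<Rightarrow> real" where
  "tv_dist S P Q = (1/2) * (\<Sum>x\<in>S. \<bar>P x - Q x\<bar>)"

end

theory Submission imports Defs "HOL-Real_Asymp.Real_Asymp" begin

fun endv :: "('e \<Rightarrow> nat) \<Rightarrow> nat \<Rightarrow> 'e list \<Rightarrow> nat" where
  "endv tgt v [] = v"
| "endv tgt v (e # es) = endv tgt (tgt e) es"

definition cnt :: "'e set \<Rightarrow> ('e \<Rightarrow> nat) \<Rightarrow> ('e \<Rightarrow> nat) \<Rightarrow> nat \<Rightarrow> nat \<Rightarrow> nat \<Rightarrow> nat" where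
  "cnt E src tgt v n w = card {\<alpha> \<in> paths_from E src tgt v n. endv tgt v \<alpha> = w}"

lemma walk_append: "is_walk_from src tgt v (xs @ ys) =
   (is_walk_from src tgt v xs \<and> is_walk_from src tgt (endv tgt v xs) ys)"
  by (induction xs arbitrary: v) auto

lemma endv_append: "endv tgt v (xs @ ys) = endv tgt (endv tgt v xs) ys"
  by (induction xs arbitrary: v) auto

lemma finite_paths_from: "finite E \<Longrightarrow> finite (paths_from E src tgt v n)"
  unfolding paths_from_def
  by (rule finite_subset[OF _ finite_lists_length_eq[of E n]]) auto

lemma paths_from_0: "paths_from E src tgt v 0 = {[]}"
  unfolding paths_from_def by auto

lemma paths_from_Suc: "paths_from E src tgt v (Suc n) =
   (\<Union>e\<in>{e\<in>E. src e = v}. (Cons e) ` paths_from E src tgt (tgt e) n)"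
  unfolding paths_from_def
  by (auto simp: length_Suc_conv)

lemma endv_lt: "graph_ok N E src tgt \<Longrightarrow> v < N \<Longrightarrow> set \<alpha> \<subseteq> E \<Longrightarrow> endv tgt v \<alpha> < N"
  by (induction \<alpha> arbitrary: v) (auto simp: graph_ok_def)

lemma cnt_Suc:
  assumes "finite E"
  shows "cnt E src tgt v (Suc n) w = (\<Sum>e\<in>{e\<in>E. src e = v}. cnt E src tgt (tgt e) n w)"
proof -
  have "{\<alpha> \<in> paths_from E src tgt v (Suc n). endv tgt v \<alpha> = w} =
     (\<Union>e\<in>{e\<in>E. src e = v}. (Cons e) ` {\<alpha> \<in> paths_from E src tgt (tgt e) n. endv tgt (tgt e) \<alpha> = w})"
    unfolding paths_from_Suc by auto
  hence "cnt E src tgt v (Suc n) w = card (\<Union>e\<in>{e\<in>E. src e = v}. (Cons e) ` {\<alpha> \<in> paths_from E src tgt (tgt e) n. endv tgt (tgt e) \<alpha> = w})"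
    unfolding cnt_def by simp
  also have "\<dots> = (\<Sum>e\<in>{e\<in>E. src e = v}. card ((Cons e) ` {\<alpha> \<in> paths_from E src tgt (tgt e) n. endv tgt (tgt e) \<alpha> = w}))"
    by (rule card_UN_disjoint) (auto simp: assms finite_paths_from)
  also have "\<dots> = (\<Sum>e\<in>{e\<in>E. src e = v}. cnt E src tgt (tgt e) n w)"
    unfolding cnt_def by (rule sum.cong) (auto simp: card_image)
  finally show ?thesis .
qed

lemma sum_group_tgt:
  assumes "graph_ok N E src tgt"
  shows "(\<Sum>e\<in>{e\<in>E. src e = v}. f (tgt e)) =
     (\<Sum>c<N. of_nat (card {e\<in>E. src e = v \<and> tgt e = c}) * f c)"
proof -
  have fin: "finite E" using assms by (auto simp: graph_ok_def)
  have "(\<Sum>e\<in>{e\<in>E. src e = v}. f (tgt e)) =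
    (\<Sum>c\<in>{..<N}. \<Sum>e\<in>{e'\<in>{e\<in>E. src e = v}. tgt e' = c}. f (tgt e))"
    by (rule sum.group[symmetric]) (use assms fin in \<open>auto simp: graph_ok_def\<close>)
  also have "\<dots> = (\<Sum>c<N. of_nat (card {e\<in>E. src e = v \<and> tgt e = c}) * f c)"
  proof (rule sum.cong[OF refl])
    fix c
    have "(\<Sum>e\<in>{e'\<in>{e\<in>E. src e = v}. tgt e' = c}. f (tgt e)) = (\<Sum>e\<in>{e\<in>E. src e = v \<and> tgt e = c}. f c)"
      by (rule sum.cong) auto
    thus "(\<Sum>e\<in>{e'\<in>{e\<in>E. src e = v}. tgt e' = c}. f (tgt e)) = of_nat (card {e\<in>E. src e = v \<and> tgt e = c}) * f c"
      by simp
  qed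
  finally show ?thesis .
qed

lemma trans_mat_carrier: "trans_mat N E src tgt \<in> carrier_mat N N"
  unfolding trans_mat_def by auto

lemma pow_mat_Suc_left: assumes "A \<in> carrier_mat n n"
  shows "A ^\<^sub>m Suc k = A * A ^\<^sub>m k"
proof (induction k)
  case 0
  then show ?case using assms by simp
next
  case (Suc k)
  have "A ^\<^sub>m Suc (Suc k) = (A * A ^\<^sub>m k) * A" using Suc by simp
  also have "\<dots> = A * (A ^\<^sub>m k * A)" using assms by (intro assoc_mult_mat) auto
  finally show ?case by simp
qed

lemma pow_entry_cnt:
  assumes g: "graph_ok N E src tgt" and "v < N" and "w < N"
  shows "(trans_mat N E src tgt ^\<^sub>m n) $$ (v, w) = of_nat (cnt E src tgt v n w)"
  using assms(2)
proof (induction n arbitrary: v)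
  case 0
  have "{\<alpha> \<in> paths_from E src tgt v 0. endv tgt v \<alpha> = w} = (if v = w then {[]} else {})"
    by (auto simp: paths_from_0)
  then show ?case using 0 assms(3) trans_mat_carrier[of N E src tgt] by (simp add: cnt_def)
next
  case (Suc n)
  let ?M = "trans_mat N E src tgt"
  have fin: "finite E" using g by (auto simp: graph_ok_def)
  have "(?M ^\<^sub>m Suc n) $$ (v, w) = (?M * ?M ^\<^sub>m n) $$ (v, w)"
    using pow_mat_Suc_left[OF trans_mat_carrier] by metis
  also have "\<dots> = (\<Sum>c<N. ?M $$ (v, c) * (?M ^\<^sub>m n) $$ (c, w))"
    using Suc.prems assms(3) trans_mat_carrier[of N E src tgt]
    by (simp add: scalar_prod_def lessThan_atLeast0)
  also have "\<dots> = (\<Sum>c<N. of_nat (card {e\<in>E. src e = v \<and> tgt e = c}) * of_nat (cnt E src tgt c n w))"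
    by (rule sum.cong[OF refl]) (use Suc in \<open>auto simp: trans_mat_def\<close>)
  also have "\<dots> = (\<Sum>e\<in>{e\<in>E. src e = v}. of_nat (cnt E src tgt (tgt e) n w))"
    by (rule sum_group_tgt[OF g, symmetric])
  also have "\<dots> = of_nat (cnt E src tgt v (Suc n) w)"
    by (simp add: cnt_Suc[OF fin])
  finally show ?case .
qed

lemma card_paths_sum:
  assumes g: "graph_ok N E src tgt" and v: "v < N"
  shows "card (paths_from E src tgt v n) = (\<Sum>w<N. cnt E src tgt v n w)"
proof -
  have fin: "finite E" using g by (auto simp: graph_ok_def)
  have "card (paths_from E src tgt v n) = (\<Sum>\<alpha>\<in>paths_from E src tgt v n. 1)" by simp
  also have "\<dots> = (\<Sum>w\<in>{..<N}. \<Sum>\<alpha>\<in>{x\<in>paths_from E src tgt v n. endv tgt v x = w}. 1)"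
  proof (rule sum.group[symmetric])
    show "finite (paths_from E src tgt v n)" by (rule finite_paths_from[OF fin])
    show "(\<lambda>x. endv tgt v x) ` paths_from E src tgt v n \<subseteq> {..<N}"
      using endv_lt[OF g v] by (auto simp: paths_from_def)
  qed auto
  also have "\<dots> = (\<Sum>w<N. cnt E src tgt v n w)" by (simp add: cnt_def)
  finally show ?thesis .
qed

lemma card_paths_Suc_ge:
  assumes fin: "finite E" and e: "e \<in> E"
  shows "card (paths_from E src tgt (tgt e) n) \<le> card (paths_from E src tgt (src e) (Suc n))"
proof -
  have "card (paths_from E src tgt (tgt e) n) = card ((Cons e) ` paths_from E src tgt (tgt e) n)"
    by (simp add: card_image)
  also have "\<dots> \<le> card (paths_from E src tgt (src e) (Suc n))"
    by (rule card_mono) (use fin e in \<open>auto simp: finite_paths_from paths_from_Suc\<close>)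
  finally show ?thesis .
qed

lemma walk_hd: "is_walk_from src tgt v q \<Longrightarrow> q \<noteq> [] \<Longrightarrow> v = src (hd q)"
  by (cases q) auto

lemma middle_count:
  assumes fin: "finite E" and q: "q \<noteq> []" "set q \<subseteq> E" "length q = m"
    and w: "is_walk_from src tgt (src (hd q)) q"
  shows "card {\<gamma> \<in> paths_from E src tgt v0 (k + m + k'). take m (drop k \<gamma>) = q}
     = cnt E src tgt v0 k (src (hd q)) * card (paths_from E src tgt (endv tgt (src (hd q)) q) k')"
proof -
  let ?a = "src (hd q)"
  let ?b = "endv tgt ?a q"
  let ?A = "{\<alpha> \<in> paths_from E src tgt v0 k. endv tgt v0 \<alpha> = ?a}"
  let ?B = "paths_from E src tgt ?b k'"
  let ?S = "{\<gamma> \<in> paths_from E src tgt v0 (k + m + k'). take m (drop k \<gamma>) = q}"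
  have "?S = (\<lambda>(\<alpha>,\<beta>). \<alpha> @ q @ \<beta>) ` (?A \<times> ?B)"
  proof
    show "?S \<subseteq> (\<lambda>(\<alpha>,\<beta>). \<alpha> @ q @ \<beta>) ` (?A \<times> ?B)"
    proof
      fix \<gamma> assume g: "\<gamma> \<in> ?S"
      hence len: "length \<gamma> = k + m + k'" and sg: "set \<gamma> \<subseteq> E" and wg: "is_walk_from src tgt v0 \<gamma>"
        and tq: "take m (drop k \<gamma>) = q"
        by (auto simp: paths_from_def)
      have dec: "\<gamma> = take k \<gamma> @ q @ drop (k + m) \<gamma>"
        using tq by (metis append_take_drop_id drop_drop add.commute)
      have w1: "is_walk_from src tgt v0 (take k \<gamma>)" and
        w2: "is_walk_from src tgt (endv tgt v0 (take k \<gamma>)) (q @ drop (k + m) \<gamma>)"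
        using wg dec walk_append by metis+
      have e1: "endv tgt v0 (take k \<gamma>) = ?a"
        using w2 q(1) by (cases q) auto
      have w3: "is_walk_from src tgt ?b (drop (k + m) \<gamma>)"
        using w2 e1 walk_append by metis
      have "take k \<gamma> \<in> ?A" using w1 e1 len sg
        by (auto simp: paths_from_def dest: in_set_takeD)
      moreover have "drop (k + m) \<gamma> \<in> ?B" using w3 len sg
        by (auto simp: paths_from_def dest: in_set_dropD)
      ultimately show "\<gamma> \<in> (\<lambda>(\<alpha>,\<beta>). \<alpha> @ q @ \<beta>) ` (?A \<times> ?B)"
        using dec by (intro image_eqI[where x="(take k \<gamma>, drop (k + m) \<gamma>)"]) auto
    qed
    show "(\<lambda>(\<alpha>,\<beta>). \<alpha> @ q @ \<beta>) ` (?A \<times> ?B) \<subseteq> ?S"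
    proof
      fix x assume "x \<in> (\<lambda>(\<alpha>,\<beta>). \<alpha> @ q @ \<beta>) ` (?A \<times> ?B)"
      then obtain \<alpha> \<beta> where x: "x = \<alpha> @ q @ \<beta>" and a: "\<alpha> \<in> ?A" and b: "\<beta> \<in> ?B" by auto
      have "is_walk_from src tgt v0 (\<alpha> @ q @ \<beta>)"
        using a b w by (auto simp: walk_append paths_from_def)
      moreover have "take m (drop k (\<alpha> @ q @ \<beta>)) = q" using a q by (auto simp: paths_from_def)
      moreover have "length (\<alpha> @ q @ \<beta>) = k + m + k'" using a b q by (auto simp: paths_from_def)
      moreover have "set (\<alpha> @ q @ \<beta>) \<subseteq> E" using a b q by (auto simp: paths_from_def)
      ultimately show "x \<in> ?S" unfolding x paths_from_def by blast
    qed
  qed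
  moreover have "inj_on (\<lambda>(\<alpha>,\<beta>). \<alpha> @ q @ \<beta>) (?A \<times> ?B)"
    by (auto simp: inj_on_def paths_from_def)
  ultimately have "card ?S = card (?A \<times> ?B)" by (simp add: card_image)
  thus ?thesis by (simp add: card_cartesian_product cnt_def)
qed

lemma middle_count0:
  assumes q: "q \<noteq> []" and w: "\<not> is_walk_from src tgt (src (hd q)) q"
  shows "{\<gamma> \<in> paths_from E src tgt v0 (k + m + k'). take m (drop k \<gamma>) = q} = {}"
proof (rule ccontr)
  assume "{\<gamma> \<in> paths_from E src tgt v0 (k + m + k'). take m (drop k \<gamma>) = q} \<noteq> {}"
  then obtain \<gamma> where wg: "is_walk_from src tgt v0 \<gamma>" and tq: "take m (drop k \<gamma>) = q"
    by (auto simp: paths_from_def)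
  have dec: "\<gamma> = take k \<gamma> @ q @ drop (k + m) \<gamma>"
    using tq by (metis append_take_drop_id drop_drop add.commute)
  have w2: "is_walk_from src tgt (endv tgt v0 (take k \<gamma>)) (q @ drop (k + m) \<gamma>)"
    using wg dec walk_append by metis
  hence "is_walk_from src tgt (endv tgt v0 (take k \<gamma>)) q" using walk_append by metis
  with walk_hd[OF this q] w show False by simp
qed


lemma dim_diag_block_sq:
  assumes "\<And>m a. F m a \<in> carrier_mat m m"
  shows "dim_row (diag_block_mat (map (\<lambda>(m,a). F m a) xs)) = sum_list (map fst xs)"
    "dim_col (diag_block_mat (map (\<lambda>(m,a). F m a) xs)) = sum_list (map fst xs)"
proof -
  have dr: "dim_row (F m a) = m" "dim_col (F m a) = m" for m a using assms[of m a] by auto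
  have "sum_list (map dim_row (map (\<lambda>(m,a). F m a) xs)) = sum_list (map fst xs) \<and>
       sum_list (map dim_col (map (\<lambda>(m,a). F m a) xs)) = sum_list (map fst xs)"
  proof (induction xs)
    case (Cons x xs)
    obtain m a where x: "x = (m,a)" by force
    show ?case using Cons unfolding x by (simp add: dr)
  qed simp
  thus "dim_row (diag_block_mat (map (\<lambda>(m,a). F m a) xs)) = sum_list (map fst xs)"
    "dim_col (diag_block_mat (map (\<lambda>(m,a). F m a) xs)) = sum_list (map fst xs)"
    unfolding dim_diag_block_mat by simp_all
qed

lemma diag_block_bound:
  fixes F G :: "nat \<Rightarrow> complex \<Rightarrow> complex mat" and s :: complex
  assumes bnd: "\<And>m a i j. (m,a) \<in> set n_as \<Longrightarrow> i < m \<Longrightarrow> j < m \<Longrightarrow>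
        norm (F m a $$ (i,j) / s - G m a $$ (i,j)) \<le> c"
    and F: "\<And>m a. F m a \<in> carrier_mat m m" and G: "\<And>m a. G m a \<in> carrier_mat m m"
    and c: "c \<ge> 0"
  shows "i < sum_list (map fst n_as) \<Longrightarrow> j < sum_list (map fst n_as) \<Longrightarrow>
     norm (diag_block_mat (map (\<lambda>(m,a). F m a) n_as) $$ (i,j) / s
         - diag_block_mat (map (\<lambda>(m,a). G m a) n_as) $$ (i,j)) \<le> c"
  using bnd
proof (induction n_as arbitrary: i j)
  case Nil
  then show ?case by simp
next
  case (Cons ma n_as)
  obtain m a where ma: "ma = (m,a)" by force
  let ?BF = "diag_block_mat (map (\<lambda>(m,a). F m a) n_as)"
  let ?BG = "diag_block_mat (map (\<lambda>(m,a). G m a) n_as)"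
  let ?S = "sum_list (map fst n_as)"
  have dF: "dim_row ?BF = ?S" "dim_col ?BF = ?S"
    using dim_diag_block_sq[of F n_as, OF F] by auto
  have dG: "dim_row ?BG = ?S" "dim_col ?BG = ?S"
    using dim_diag_block_sq[of G n_as, OF G] by auto
  have Fm: "dim_row (F m a) = m" "dim_col (F m a) = m" using F[of m a] by auto
  have Gm: "dim_row (G m a) = m" "dim_col (G m a) = m" using G[of m a] by auto
  have IH: "norm (?BF $$ (i',j') / s - ?BG $$ (i',j')) \<le> c" if "i' < ?S" "j' < ?S" for i' j'
  proof (rule Cons.IH[OF that])
    fix m' a' i'' j'' assume "(m',a') \<in> set n_as" "i'' < m'" "j'' < m'"
    thus "norm (F m' a' $$ (i'',j'') / s - G m' a' $$ (i'',j'')) \<le> c"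
      by (intro Cons.prems(3)) auto
  qed
  have b0: "norm (F m a $$ (i',j') / s - G m a $$ (i',j')) \<le> c" if "i' < m" "j' < m" for i' j'
    by (rule Cons.prems(3)[OF _ that]) (simp add: ma)
  have ij: "i < m + ?S" "j < m + ?S" using Cons.prems(1,2) ma by auto
  have eF: "diag_block_mat (map (\<lambda>(m,a). F m a) (ma # n_as)) = four_block_mat (F m a) (0\<^sub>m m ?S) (0\<^sub>m ?S m) ?BF"
    unfolding ma using dF Fm by (simp add: Let_def)
  have eG: "diag_block_mat (map (\<lambda>(m,a). G m a) (ma # n_as)) = four_block_mat (G m a) (0\<^sub>m m ?S) (0\<^sub>m ?S m) ?BG"
    unfolding ma using dG Gm by (simp add: Let_def)
  have iF: "four_block_mat (F m a) (0\<^sub>m m ?S) (0\<^sub>m ?S m) ?BF $$ (i,j) =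
     (if i < m then if j < m then F m a $$ (i,j) else 0 else if j < m then 0 else ?BF $$ (i - m, j - m))"
    using ij dF Fm by (subst index_mat_four_block) auto
  have iG: "four_block_mat (G m a) (0\<^sub>m m ?S) (0\<^sub>m ?S m) ?BG $$ (i,j) =
     (if i < m then if j < m then G m a $$ (i,j) else 0 else if j < m then 0 else ?BG $$ (i - m, j - m))"
    using ij dG Gm by (subst index_mat_four_block) auto
  show ?case
    unfolding eF eG iF iG
  proof (cases "i < m"; cases "j < m")
    assume "\<not> i < m" "\<not> j < m"
    thus "norm ((if i < m then if j < m then F m a $$ (i, j) else 0 else if j < m then 0 else ?BF $$ (i - m, j - m)) / s -
          (if i < m then if j < m then G m a $$ (i, j) else 0 else if j < m then 0 else ?BG $$ (i - m, j - m))) \<le> c"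
      using IH[of "i - m" "j - m"] ij by simp
  qed (use b0 c in simp_all)
qed

lemma jordan_block_bound:
  fixes a :: complex and lam mu :: real
  assumes lam: "lam > 0" and mu: "0 < mu" "mu < lam" and a: "norm a < mu" and m: "m \<le> n"
    and ij: "i < m" "j < m"
  shows "norm ((jordan_block m a ^\<^sub>m k) $$ (i,j) / of_real lam ^ k)
     \<le> (max 1 (1/mu)) ^ n * (real k + 1) ^ n * (mu / lam) ^ k"
proof (cases "i \<le> j \<and> j - i \<le> k")
  case False
  have "(jordan_block m a ^\<^sub>m k) $$ (i,j) = 0"
    using False ij by (auto simp: jordan_block_pow)
  then show ?thesis using mu lam by simp
next
  case True
  define d where "d = j - i"
  have dk: "d \<le> k" and dn: "d \<le> n" using True ij m by (auto simp: d_def)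
  have e: "(jordan_block m a ^\<^sub>m k) $$ (i,j) = of_nat (k choose d) * a ^ (k - d)"
    using True ij by (auto simp: jordan_block_pow d_def intro!: arg_cong[of _ _ "\<lambda>x. a ^ x"])
  have "norm ((jordan_block m a ^\<^sub>m k) $$ (i,j) / of_real lam ^ k)
        = real (k choose d) * norm a ^ (k - d) / lam ^ k"
    unfolding e using lam by (simp add: norm_mult norm_divide norm_power)
  also have "\<dots> \<le> real (k ^ d) * mu ^ (k - d) / lam ^ k"
    using lam a binomial_le_pow[OF dk]
    by (intro divide_right_mono mult_mono power_mono) auto
  also have "\<dots> = real k ^ d * (1 / mu) ^ d * (mu / lam) ^ k"
    using mu lam dk by (simp add: field_simps power_diff)
  also have "\<dots> \<le> (real k + 1) ^ n * (max 1 (1/mu)) ^ n * (mu / lam) ^ k"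
  proof (intro mult_right_mono mult_mono)
    show "real k ^ d \<le> (real k + 1) ^ n"
      by (rule order.trans[of _ "(real k + 1) ^ d"]) (auto intro: power_mono power_increasing dn)
    show "(1 / mu) ^ d \<le> max 1 (1 / mu) ^ n"
    proof (rule order.trans[of _ "(max 1 (1 / mu)) ^ d"])
      show "(1 / mu) ^ d \<le> max 1 (1 / mu) ^ d" using mu by (intro power_mono) auto
    qed (auto intro: power_increasing dn)
  qed (use mu lam in auto)
  finally show ?thesis by (simp add: mult_ac)
qed


lemma filter_comp_eq: "[(n, e)\<leftarrow>xs . e = ev] = filter (\<lambda>na. snd na = ev) xs"
  by (induction xs) auto

lemma sum_list_eq_le:
  fixes f g :: "'a \<Rightarrow> nat"
  assumes "\<forall>x\<in>set xs. f x \<le> g x" and "sum_list (map f xs) = sum_list (map g xs)" and "x \<in> set xs"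
  shows "f x = g x"
  using assms
proof (induction xs)
  case (Cons y ys)
  have le: "sum_list (map f ys) \<le> sum_list (map g ys)"
    using Cons.prems(1) by (intro sum_list_mono) auto
  have fy: "f y \<le> g y" using Cons.prems(1) by auto
  from Cons.prems(2) have eq: "f y + sum_list (map f ys) = g y + sum_list (map g ys)" by simp
  hence "f y = g y" "sum_list (map f ys) = sum_list (map g ys)" using le fy by linarith+
  then show ?case using Cons by auto
qed simp

lemma mult3_entry:
  fixes P J Q :: "'a :: comm_ring_1 mat"
  assumes P: "P \<in> carrier_mat n n" and J: "J \<in> carrier_mat n n" and Q: "Q \<in> carrier_mat n n"
    and i: "i < n" and j: "j < n"
  shows "(P * J * Q) $$ (i,j) = (\<Sum>y<n. \<Sum>x<n. P $$ (i,x) * J $$ (x,y) * Q $$ (y,j))"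
proof -
  have e1: "(P * J) $$ (i,y) = (\<Sum>x<n. P $$ (i,x) * J $$ (x,y))" if "y < n" for y
    using P J i that by (simp add: scalar_prod_def lessThan_atLeast0)
  have "(P * J * Q) $$ (i,j) = (\<Sum>y<n. (P * J) $$ (i,y) * Q $$ (y,j))"
    using P J Q i j by (simp add: scalar_prod_def lessThan_atLeast0 del: assoc_mult_mat)
  also have "\<dots> = (\<Sum>y<n. \<Sum>x<n. P $$ (i,x) * J $$ (x,y) * Q $$ (y,j))"
    by (rule sum.cong[OF refl]) (simp add: e1 sum_distrib_right)
  finally show ?thesis .
qed

lemma semisimple_conv:
  fixes A :: "complex mat"
  assumes A: "A \<in> carrier_mat n n" and n: "n > 0" and ss: "semisimple A"
    and lam0: "spectral_radius A > 0"
  shows "\<exists>L K q. 0 < q \<and> q < 1 \<and> 0 \<le> K \<and> (\<forall>k i j. i < n \<longrightarrow> j < n \<longrightarrow>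
     norm ((A ^\<^sub>m k) $$ (i,j) / of_real (spectral_radius A) ^ k - L $$ (i,j)) \<le> K * (real k + 1) ^ n * q ^ k)"
proof -
  define lam where "lam = spectral_radius A"
  have lam: "lam > 0" using lam0 by (simp add: lam_def)
  obtain as where "char_poly A = (\<Prod>a\<leftarrow>as. [:- a, 1:])" using char_poly_factorized[OF A] by auto
  then obtain n_as where jnf: "jordan_nf A n_as" using jordan_nf_exists[OF A] by blast
  obtain P Q where P: "P \<in> carrier_mat n n" and Q: "Q \<in> carrier_mat n n"
    and "char_poly A = (\<Prod>(na, a)\<leftarrow>n_as. [:- a, 1:] ^ na)"
    and pw: "\<And>k. A ^\<^sub>m k = P * jordan_matrix n_as ^\<^sub>m k * Q"
    by (rule jordan_nf_powE[OF A jnf]) (rule that)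
  have sum_n: "sum_list (map fst n_as) = n"
  proof -
    have sim: "similar_mat A (jordan_matrix n_as)" using jnf unfolding jordan_nf_def by (rule conjunct2)
    from similar_matD[OF sim] obtain n' P' Q' where
      c: "{A, jordan_matrix n_as, P', Q'} \<subseteq> carrier_mat n' n'" by (elim exE conjE)
    have A': "A \<in> carrier_mat n' n'" and J': "jordan_matrix n_as \<in> carrier_mat n' n'"
      using c by (simp_all only: insert_subset)
    show ?thesis using carrier_matD(1)[OF J'] carrier_matD(1)[OF A'] carrier_matD(1)[OF A]
      jordan_matrix_dim(1)[of n_as] by linarith
  qed
  have nz: "0 \<notin> fst ` set n_as" using jnf unfolding jordan_nf_def by simp
  have pos: "0 < m" if "(m,a) \<in> set n_as" for m a
  proof (rule ccontr)
    assume "\<not> 0 < m"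
    hence "m = 0" by simp
    hence "0 \<in> fst ` set n_as" using that by force
    thus False using nz by simp
  qed
  have mle: "m \<le> n" if "(m,a) \<in> set n_as" for m a
  proof -
    have "m \<in> set (map fst n_as)" using that by force
    from member_le_sum_list[OF this] sum_n show ?thesis by simp
  qed
  have "coeff (char_poly A) n = 1" using degree_monic_char_poly[OF A] by simp
  hence cp0: "char_poly A \<noteq> 0" by auto
  have eig: "eigenvalue A a" if "(m,a) \<in> set n_as" for m a
  proof -
    have "m \<in> set (map fst (filter (\<lambda>na. snd na = a) n_as))" using that by force
    from member_le_sum_list[OF this] jordan_nf_order[OF jnf, of a] pos[OF that]
    have "Polynomial.order a (char_poly A) \<noteq> 0" by linarith
    hence "poly (char_poly A) a = 0" using order_root cp0 by blast
    thus ?thesis using eigenvalue_root_char_poly[OF A] by simp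
  qed
  have nle: "norm a \<le> lam" if "eigenvalue A a" for a
  proof -
    have "norm a \<in> norm ` spectrum A" using that unfolding spectrum_def by blast
    from spectral_radius_mem_max(2)[OF A n this] show ?thesis unfolding lam_def .
  qed
  have ss1: "\<forall>ev. eigenvalue A ev \<and> cmod ev = spectral_radius A \<longrightarrow>
            dim_gen_eigenspace A ev 1 = Polynomial.order ev (char_poly A)"
    using ss unfolding semisimple_def by (rule conjunct1)
  have ss2: "\<forall>ev. eigenvalue A ev \<and> cmod ev = spectral_radius A \<longrightarrow>
            ev = complex_of_real (spectral_radius A)"
    using ss unfolding semisimple_def by (rule conjunct2)
  have eqlam: "a = of_real lam" if "eigenvalue A a" "norm a = lam" for a
    using mp[OF spec[OF ss2, of a]] that unfolding lam_def by blast
  have one: "m = 1" if "(m, of_real lam) \<in> set n_as" for m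
  proof -
    let ?ev = "complex_of_real lam"
    have e: "eigenvalue A ?ev" using eig[OF that] .
    have "cmod ?ev = spectral_radius A" using lam by (simp add: lam_def)
    hence dg: "dim_gen_eigenspace A ?ev 1 = Polynomial.order ?ev (char_poly A)"
      using mp[OF spec[OF ss1, of ?ev]] e by blast
    let ?xs = "map fst (filter (\<lambda>na. snd na = ?ev) n_as)"
    have d1: "dim_gen_eigenspace A ?ev 1 = sum_list (map (min 1) ?xs)"
      unfolding dim_gen_eigenspace[OF jnf] filter_comp_eq by (simp only: min.commute)
    have d2: "Polynomial.order ?ev (char_poly A) = sum_list (map (\<lambda>x. x) ?xs)"
      unfolding jordan_nf_order[OF jnf] by simp
    have eqs: "sum_list (map (min 1) ?xs) = sum_list (map (\<lambda>x. x) ?xs)"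
      using dg d1 d2 by simp
    have mem: "m \<in> set ?xs" using that by force
    have "min 1 m = m"
      by (rule sum_list_eq_le[of ?xs "min 1" "\<lambda>x. x" m, OF _ eqs mem]) auto
    thus ?thesis using pos[OF that] by simp
  qed
  define S where "S = (\<lambda>a. norm a) ` {a \<in> snd ` set n_as. a \<noteq> of_real lam}"
  define M0 where "M0 = Max (insert 0 S)"
  have finS: "finite S" unfolding S_def by auto
  have Slt: "x < lam" if "x \<in> S" for x
  proof -
    from that obtain m a where ma: "(m,a) \<in> set n_as" "a \<noteq> of_real lam" "x = norm a"
      unfolding S_def by force
    have "norm a \<le> lam" using nle[OF eig[OF ma(1)]] .
    moreover have "norm a \<noteq> lam" using eqlam[OF eig[OF ma(1)]] ma(2) by auto
    ultimately show ?thesis using ma by simp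
  qed
  have M0: "0 \<le> M0" "M0 < lam"
    unfolding M0_def using finS Slt lam by (auto simp: Max_ge_iff Max_less_iff)
  have aM0: "norm a \<le> M0" if "(m,a) \<in> set n_as" "a \<noteq> of_real lam" for m a
  proof -
    have "norm a \<in> S" using that unfolding S_def by force
    thus ?thesis unfolding M0_def using finS by (auto intro: Max_ge)
  qed
  define mu where "mu = (lam + M0) / 2"
  have mu: "0 < mu" "mu < lam" using M0 lam by (auto simp: mu_def)
  have amu: "norm a < mu" if "(m,a) \<in> set n_as" "a \<noteq> of_real lam" for m a
    using aM0[OF that] M0 by (auto simp: mu_def)
  define G :: "nat \<Rightarrow> complex \<Rightarrow> complex mat"
    where "G m a = (if a = of_real lam then 1\<^sub>m m else 0\<^sub>m m m)" for m a
  define c where "c = max 1 (1/mu) ^ n"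
  define q where "q = mu / lam"
  define r where "r k = c * (real k + 1) ^ n * q ^ k" for k
  have c0: "c \<ge> 0" unfolding c_def by auto
  have q: "0 < q" "q < 1" using mu lam by (auto simp: q_def)
  have r0: "r k \<ge> 0" for k unfolding r_def using c0 q by auto
  have blk: "norm ((jordan_block m a ^\<^sub>m k) $$ (i,j) / of_real lam ^ k - G m a $$ (i,j)) \<le> r k"
    if ma: "(m,a) \<in> set n_as" and ij: "i < m" "j < m" for m a i j k
  proof (cases "a = of_real lam")
    case True
    have m1: "m = 1" using one ma True by simp
    have ij0: "i = 0" "j = 0" using ij m1 by auto
    have "(jordan_block m a ^\<^sub>m k) $$ (i,j) = a ^ k" using m1 ij0 by (simp add: jordan_block_pow)
    moreover have "G m a $$ (i,j) = 1" using True m1 ij0 by (simp add: G_def)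
    ultimately show ?thesis using True lam r0[of k] by simp
  next
    case False
    have "G m a $$ (i,j) = 0" using False ij by (simp add: G_def)
    thus ?thesis using jordan_block_bound[OF lam mu amu[OF ma False] mle[OF ma] ij, of k]
      by (simp add: r_def c_def q_def mult_ac)
  qed
  define GA where "GA = diag_block_mat (map (\<lambda>(m,a). G m a) n_as)"
  have Gc: "G m a \<in> carrier_mat m m" for m a by (simp add: G_def)
  have GA: "GA \<in> carrier_mat n n"
    using dim_diag_block_sq[of G n_as, OF Gc] sum_n unfolding GA_def carrier_mat_def by auto
  have Jc: "jordan_matrix n_as ^\<^sub>m k \<in> carrier_mat n n" for k
    using jordan_matrix_carrier[of n_as] sum_n by auto
  have Jb: "norm ((jordan_matrix n_as ^\<^sub>m k) $$ (i,j) / of_real lam ^ k - GA $$ (i,j)) \<le> r k"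
    if "i < n" "j < n" for i j k
    unfolding jordan_matrix_pow GA_def
    by (rule diag_block_bound[of n_as "\<lambda>m a. jordan_block m a ^\<^sub>m k"])
      (use that sum_n blk r0 Gc in auto)
  define L where "L = P * GA * Q"
  define K where "K = c * (\<Sum>i<n. \<Sum>j<n. \<Sum>y<n. \<Sum>x<n. norm (P $$ (i,x)) * norm (Q $$ (y,j)))"
  have K0: "K \<ge> 0" unfolding K_def using c0 by (intro mult_nonneg_nonneg sum_nonneg) auto
  show ?thesis
  proof (rule exI[of _ L], rule exI[of _ K], rule exI[of _ q], intro conjI allI impI)
    fix k i j assume i: "i < n" and j: "j < n"
    let ?J = "jordan_matrix n_as ^\<^sub>m k"
    let ?s = "complex_of_real (spectral_radius A) ^ k"
    have s: "?s = of_real lam ^ k" by (simp add: lam_def)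
    have "(A ^\<^sub>m k) $$ (i,j) / ?s - L $$ (i,j) =
       (\<Sum>y<n. \<Sum>x<n. P $$ (i,x) * ?J $$ (x,y) * Q $$ (y,j)) / ?s
        - (\<Sum>y<n. \<Sum>x<n. P $$ (i,x) * GA $$ (x,y) * Q $$ (y,j))"
      unfolding pw L_def using mult3_entry[OF P Jc Q i j] mult3_entry[OF P GA Q i j] by simp
    also have "\<dots> = (\<Sum>y<n. \<Sum>x<n. P $$ (i,x) * (?J $$ (x,y) / of_real lam ^ k - GA $$ (x,y)) * Q $$ (y,j))"
      unfolding s sum_divide_distrib sum_subtractf[symmetric]
      by (rule sum.cong[OF refl], rule sum.cong[OF refl]) (simp add: algebra_simps)
    finally have eq: "(A ^\<^sub>m k) $$ (i,j) / ?s - L $$ (i,j) = \<dots>" .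
    have "norm ((A ^\<^sub>m k) $$ (i,j) / ?s - L $$ (i,j))
       \<le> (\<Sum>y<n. \<Sum>x<n. norm (P $$ (i,x) * (?J $$ (x,y) / of_real lam ^ k - GA $$ (x,y)) * Q $$ (y,j)))"
      unfolding eq by (rule order.trans[OF norm_sum sum_mono]) (rule norm_sum)
    also have "\<dots> \<le> (\<Sum>y<n. \<Sum>x<n. norm (P $$ (i,x)) * norm (Q $$ (y,j)) * r k)"
    proof (intro sum_mono)
      fix y x assume "y \<in> {..<n}" "x \<in> {..<n}"
      hence hb: "norm (?J $$ (x,y) / of_real lam ^ k - GA $$ (x,y)) \<le> r k" using Jb by auto
      show "norm (P $$ (i,x) * (?J $$ (x,y) / of_real lam ^ k - GA $$ (x,y)) * Q $$ (y,j))
          \<le> norm (P $$ (i,x)) * norm (Q $$ (y,j)) * r k"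
        unfolding norm_mult
        using mult_right_mono[OF mult_left_mono[OF hb norm_ge_zero[of "P $$ (i,x)"]] norm_ge_zero[of "Q $$ (y,j)"]]
        by (simp add: mult_ac)
    qed
    also have "\<dots> = (\<Sum>y<n. \<Sum>x<n. norm (P $$ (i,x)) * norm (Q $$ (y,j))) * r k"
      by (simp add: sum_distrib_right)
    also have "\<dots> \<le> (\<Sum>i<n. \<Sum>j<n. \<Sum>y<n. \<Sum>x<n. norm (P $$ (i,x)) * norm (Q $$ (y,j))) * r k"
    proof (rule mult_right_mono[OF _ r0])
      let ?f = "\<lambda>i j. \<Sum>y<n. \<Sum>x<n. norm (P $$ (i,x)) * norm (Q $$ (y,j))"
      have "?f i j \<le> (\<Sum>j<n. ?f i j)"
        using j by (intro member_le_sum) (auto intro!: sum_nonneg)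
      also have "\<dots> \<le> (\<Sum>i<n. \<Sum>j<n. ?f i j)"
        using i by (intro member_le_sum[of i "{..<n}" "\<lambda>i. \<Sum>j<n. ?f i j"]) (auto intro!: sum_nonneg)
      finally show "?f i j \<le> (\<Sum>i<n. \<Sum>j<n. ?f i j)" .
    qed
    also have "\<dots> = K * (real k + 1) ^ n * q ^ k" unfolding K_def r_def by (simp add: mult_ac)
    finally show "norm ((A ^\<^sub>m k) $$ (i,j) / ?s - L $$ (i,j)) \<le> K * (real k + 1) ^ n * q ^ k" .
  qed (use q K0 in auto)
qed


lemma tendsto_poly_geom:
  fixes K q :: real
  assumes q: "0 < q" "q < 1"
  shows "(\<lambda>k. K * (real k + 1) ^ n * q ^ k) \<longlonglongrightarrow> 0"
proof (cases "n = 0")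
  case True
  have "(\<lambda>k. K * q ^ k) \<longlonglongrightarrow> K * 0"
    by (intro tendsto_mult tendsto_const LIMSEQ_power_zero) (use q in auto)
  thus ?thesis using True by simp
next
  case False
  define r where "r = q powr (1 / real n)"
  have r1: "r < 1"
  proof -
    have "q powr (1 / real n) < 1 powr (1 / real n)"
      using q False by (intro powr_less_mono2) auto
    thus ?thesis unfolding r_def by simp
  qed
  have r: "0 < r" "r < 1" using q r1 unfolding r_def by auto
  have rn: "r ^ n = q"
  proof -
    have "r ^ n = r powr real n" using r by (simp add: powr_realpow)
    also have "\<dots> = q" using False q unfolding r_def by (simp add: powr_powr)
    finally show ?thesis .
  qed
  have "(\<lambda>k. real k * r ^ k + r ^ k) \<longlonglongrightarrow> 0 + 0"
    by (intro tendsto_add powser_times_n_limit_0 LIMSEQ_power_zero) (use r in auto)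
  hence "(\<lambda>k. (real k + 1) * r ^ k) \<longlonglongrightarrow> 0" by (simp add: algebra_simps)
  hence "(\<lambda>k. K * ((real k + 1) * r ^ k) ^ n) \<longlonglongrightarrow> K * 0 ^ n"
    by (intro tendsto_mult tendsto_const tendsto_power)
  moreover have "((real k + 1) * r ^ k) ^ n = (real k + 1) ^ n * q ^ k" for k
    by (simp add: power_mult_distrib rn[symmetric] power_mult[symmetric] mult.commute)
  ultimately have "(\<lambda>k. K * ((real k + 1) ^ n * q ^ k)) \<longlonglongrightarrow> K * 0 ^ n" by simp
  moreover have "K * (0::real) ^ n = 0" using False by simp
  ultimately show ?thesis by (simp add: mult.assoc)
qed

lemma nat_filterlim_from_real:
  fixes f :: "nat \<Rightarrow> nat" and g :: "nat \<Rightarrow> real"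
  assumes g: "filterlim g at_top sequentially" and le: "eventually (\<lambda>n. g n \<le> real (f n)) sequentially"
  shows "filterlim f at_top sequentially"
  unfolding filterlim_at_top
proof
  fix Z :: nat
  have "eventually (\<lambda>n. real Z \<le> g n) sequentially" using g by (simp add: filterlim_at_top)
  thus "eventually (\<lambda>n. Z \<le> f n) sequentially"
    using le by eventually_elim simp
qed

lemma mpf_nonwalk:
  "\<not> is_walk_from src tgt a q \<Longrightarrow> markov_prob_from src tgt p a q = 0"
  by (induction q arbitrary: a) auto


theorem lemma6p1:
  fixes N :: nat and E :: "'e set" and src tgt :: "'e \<Rightarrow> nat" and v0 :: nat
  defines "M \<equiv> trans_mat N E src tgt"
  defines "lam \<equiv> spectral_radius M"
  defines "\<rho> \<equiv> (\<lambda>i. lim (\<lambda>n. (\<Sum>j<N. Re ((M ^\<^sub>m n) $$ (i, j))) / lam ^ n))"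
  defines "u \<equiv> (\<lambda>i. lim (\<lambda>n. Re ((M ^\<^sub>m n) $$ (v0, i)) / lam ^ n))"
  defines "\<pi> \<equiv> (\<lambda>i. u i * \<rho> i / \<rho> v0)"
  defines "p \<equiv> (\<lambda>e. \<rho> (tgt e) / (lam * \<rho> (src e)))"
  defines "k \<equiv> (\<lambda>n::nat. nat \<lfloor>ln (real n)\<rfloor>)"
  defines "lamt \<equiv> (\<lambda>n::nat. \<lambda>q. real (card {\<gamma> \<in> paths_from E src tgt v0 n.
                          take (n - 2 * k n) (drop (k n) \<gamma>) = q})
                     / real (card (paths_from E src tgt v0 n)))"
  assumes "graph_ok N E src tgt"
    and "v0 < N"
    and "semisimple M"
    and "lam > 1"
    and "large_growth E src tgt lam v0"
  shows "(\<lambda>n. tv_dist {q. set q \<subseteq> E \<and> length q = n - 2 * k n}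
                     (markov_prob E src tgt \<pi> p) (lamt n)) \<longlonglongrightarrow> 0"
proof -
  note g = assms(9)
  have fin: "finite E" using g by (simp add: graph_ok_def)
  have tgtN: "tgt e < N" "src e < N" if "e \<in> E" for e using g that by (auto simp: graph_ok_def)
  have v0: "v0 < N" by (rule assms(10))
  have N0: "N > 0" using v0 by simp
  have Mc: "M \<in> carrier_mat N N" unfolding M_def by (rule trans_mat_carrier)
  have lam1: "lam > 1" by (rule assms(12))
  have lam0: "lam > 0" using lam1 by simp
  have "spectral_radius M > 0" using lam0 by (simp add: lam_def)
  from semisimple_conv[OF Mc N0 assms(11) this] obtain L K q where
    q: "0 < q" "q < 1" and K: "0 \<le> K" and
    bnd: "\<And>kk i j. i < N \<Longrightarrow> j < N \<Longrightarrow>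
       norm ((M ^\<^sub>m kk) $$ (i,j) / of_real lam ^ kk - L $$ (i,j)) \<le> K * (real kk + 1) ^ N * q ^ kk"
    unfolding lam_def[symmetric] by blast
  define cn where "cn i kk j = real (cnt E src tgt i kk j)" for i kk j
  define C where "C i kk = real (card (paths_from E src tgt i kk))" for i kk
  have ent: "(M ^\<^sub>m kk) $$ (i,j) = of_nat (cnt E src tgt i kk j)" if "i < N" "j < N" for i j kk
    unfolding M_def by (rule pow_entry_cnt[OF g that])
  define Lr where "Lr i j = Re (L $$ (i,j))" for i j
  define b where "b kk = K * (real kk + 1) ^ N * q ^ kk" for kk
  have b0: "b \<longlonglongrightarrow> 0" unfolding b_def by (rule tendsto_poly_geom[OF q])
  have errb: "\<bar>cn i kk j / lam ^ kk - Lr i j\<bar> \<le> b kk" if "i < N" "j < N" for i j kk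
  proof -
    have "cn i kk j / lam ^ kk - Lr i j = Re ((M ^\<^sub>m kk) $$ (i,j) / of_real lam ^ kk - L $$ (i,j))"
      unfolding ent[OF that] cn_def Lr_def of_real_power[symmetric] Re_divide_of_real by simp
    also have "\<bar>\<dots>\<bar> \<le> norm ((M ^\<^sub>m kk) $$ (i,j) / of_real lam ^ kk - L $$ (i,j))"
      by (rule abs_Re_le_cmod)
    also have "\<dots> \<le> b kk" unfolding b_def by (rule bnd[OF that])
    finally show ?thesis .
  qed
  have conv: "(\<lambda>kk. cn i kk j / lam ^ kk) \<longlonglongrightarrow> Lr i j" if "i < N" "j < N" for i j
  proof -
    have "(\<lambda>kk. cn i kk j / lam ^ kk - Lr i j) \<longlonglongrightarrow> 0"
    proof (rule tendsto_norm_zero_cancel, rule real_tendsto_sandwich[OF _ _ tendsto_const b0])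
      show "\<forall>\<^sub>F n in sequentially. 0 \<le> norm (cn i n j / lam ^ n - Lr i j)" by simp
      show "\<forall>\<^sub>F n in sequentially. norm (cn i n j / lam ^ n - Lr i j) \<le> b n"
        using errb[OF that] by simp
    qed
    thus ?thesis by (rule LIM_zero_cancel)
  qed
  have cardC: "C i kk = (\<Sum>j<N. cn i kk j)" if "i < N" for i kk
    unfolding C_def cn_def card_paths_sum[OF g that] by simp
  define R where "R i = (\<Sum>j<N. Lr i j)" for i
  have Cconv: "(\<lambda>n. C i n / lam ^ n) \<longlonglongrightarrow> R i" if "i < N" for i
  proof -
    have "(\<lambda>n. \<Sum>j<N. cn i n j / lam ^ n) \<longlonglongrightarrow> R i"
      unfolding R_def by (intro tendsto_sum conv that) simp
    thus ?thesis unfolding cardC[OF that] sum_divide_distrib .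
  qed
  have rowRe: "(\<Sum>j<N. Re ((M ^\<^sub>m n) $$ (i, j))) = C i n" if "i < N" for i n
    unfolding cardC[OF that] cn_def using ent[OF that] by simp
  have rho: "\<rho> i = R i" if "i < N" for i
    unfolding \<rho>_def rowRe[OF that] by (rule limI[OF Cconv[OF that]])
  have Cconv': "(\<lambda>n. C i n / lam ^ n) \<longlonglongrightarrow> \<rho> i" if "i < N" for i
    using Cconv[OF that] rho[OF that] by simp
  have uconv: "(\<lambda>n. cn v0 n i / lam ^ n) \<longlonglongrightarrow> u i" if "i < N" for i
  proof -
    have "u i = Lr v0 i"
      unfolding u_def using ent[OF v0 that] conv[OF v0 that] by (simp add: cn_def limI)
    thus ?thesis using conv[OF v0 that] by simp
  qed
  have rho_nn: "\<rho> i \<ge> 0" if "i < N" for i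
    by (rule tendsto_lowerbound[OF Cconv'[OF that]]) (use lam0 in \<open>auto simp: C_def intro!: always_eventually\<close>)
  have rho_edge: "\<rho> (tgt e) \<le> lam * \<rho> (src e)" if e: "e \<in> E" for e
  proof (rule LIMSEQ_le[OF Cconv'[OF tgtN(1)[OF e]]])
    have "(\<lambda>n. lam * (C (src e) (Suc n) / lam ^ Suc n)) \<longlonglongrightarrow> lam * \<rho> (src e)"
      by (intro tendsto_mult_left) (rule LIMSEQ_Suc[OF Cconv'[OF tgtN(2)[OF e]]])
    thus "(\<lambda>n. lam * (C (src e) (Suc n) / lam ^ Suc n)) \<longlonglongrightarrow> lam * \<rho> (src e)" .
    show "\<exists>N. \<forall>n\<ge>N. C (tgt e) n / lam ^ n \<le> lam * (C (src e) (Suc n) / lam ^ Suc n)"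
    proof (intro exI allI impI)
      fix n
      have "C (tgt e) n \<le> C (src e) (Suc n)"
        unfolding C_def using card_paths_Suc_ge[OF fin e] by simp
      thus "C (tgt e) n / lam ^ n \<le> lam * (C (src e) (Suc n) / lam ^ Suc n)"
        using lam0 by (simp add: divide_right_mono)
    qed
  qed
  have rho_walk: "\<rho> (endv tgt a w) \<le> lam ^ length w * \<rho> a"
    if "a < N" "set w \<subseteq> E" "is_walk_from src tgt a w" for a w
    using that
  proof (induction w arbitrary: a)
    case Nil
    then show ?case by simp
  next
    case (Cons e w)
    have e: "e \<in> E" "src e = a" using Cons.prems by auto
    have "\<rho> (endv tgt a (e # w)) = \<rho> (endv tgt (tgt e) w)" by simp
    also have "\<dots> \<le> lam ^ length w * \<rho> (tgt e)"
      using Cons.IH[of "tgt e"] Cons.prems tgtN[OF e(1)] by auto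
    also have "\<dots> \<le> lam ^ length w * (lam * \<rho> a)"
      using rho_edge[OF e(1)] e(2) lam0 by (intro mult_left_mono) auto
    finally show ?case by (simp add: mult_ac)
  qed
  have mpf: "markov_prob_from src tgt p a w * (lam ^ length w * \<rho> a) = \<rho> (endv tgt a w)"
    if "a < N" "set w \<subseteq> E" "is_walk_from src tgt a w" for a w
    using that
  proof (induction w arbitrary: a)
    case Nil
    then show ?case by simp
  next
    case (Cons e w)
    have e: "e \<in> E" "src e = a" using Cons.prems by auto
    have IH: "markov_prob_from src tgt p (tgt e) w * (lam ^ length w * \<rho> (tgt e)) = \<rho> (endv tgt (tgt e) w)"
      using Cons.IH[of "tgt e"] Cons.prems tgtN[OF e(1)] by auto
    show ?case
    proof (cases "\<rho> a = 0")
      case True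
      have "\<rho> (endv tgt a (e # w)) \<le> 0"
        using rho_walk[OF Cons.prems] True by simp
      moreover have "\<rho> (endv tgt a (e # w)) \<ge> 0"
        by (rule rho_nn, rule endv_lt[OF g Cons.prems(1,2)])
      ultimately show ?thesis using True by simp
    next
      case False
      have "markov_prob_from src tgt p a (e # w) * (lam ^ length (e # w) * \<rho> a)
          = \<rho> (tgt e) / (lam * \<rho> a) * markov_prob_from src tgt p (tgt e) w * (lam * lam ^ length w * \<rho> a)"
        using e by (simp add: p_def)
      also have "\<dots> = markov_prob_from src tgt p (tgt e) w * (lam ^ length w * \<rho> (tgt e))"
        using False lam0 by (simp add: field_simps)
      also have "\<dots> = \<rho> (endv tgt a (e # w))" using IH by simp
      finally show ?thesis .
    qed
  qed
  have Cerr: "\<bar>C v0 n / lam ^ n - \<rho> v0\<bar> \<le> real N * b n" for n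
  proof -
    have "C v0 n / lam ^ n - \<rho> v0 = (\<Sum>j<N. cn v0 n j / lam ^ n - Lr v0 j)"
      unfolding cardC[OF v0] rho[OF v0] R_def sum_divide_distrib sum_subtractf ..
    also have "\<bar>\<dots>\<bar> \<le> (\<Sum>j<N. \<bar>cn v0 n j / lam ^ n - Lr v0 j\<bar>)" by (rule sum_abs)
    also have "\<dots> \<le> (\<Sum>j<N. b n)" by (intro sum_mono errb[OF v0]) simp
    finally show ?thesis by simp
  qed
  have rho0: "\<rho> v0 > 0"
  proof (rule ccontr)
    assume "\<not> \<rho> v0 > 0"
    hence r0: "\<rho> v0 = 0" using rho_nn[OF v0] by simp
    obtain f :: "nat \<Rightarrow> real" where fo: "f \<in> o(\<lambda>n. real n)"
      and fe: "\<And>n. real (card (paths_from E src tgt v0 n)) = lam powr (real n + f n)"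
      using assms(13) unfolding large_growth_def by blast
    define s where "s = sqrt q"
    have s: "0 < s" "s < 1" "s * s = q" using q by (auto simp: s_def)
    define eps where "eps = - ln s / ln lam"
    have lnlam: "ln lam > 0" using lam1 by simp
    have lns: "ln s < 0" using s by simp
    have eps: "eps > 0" unfolding eps_def using lnlam lns by (simp add: divide_neg_pos)
    have ev1: "eventually (\<lambda>n. norm (f n) \<le> eps * norm (real n)) sequentially"
      using landau_o.smallD[OF fo eps] by simp
    have "(\<lambda>n. (real N * K) * (real n + 1) ^ N * s ^ n) \<longlonglongrightarrow> 0"
      by (rule tendsto_poly_geom[OF s(1,2)])
    hence ev2: "eventually (\<lambda>n. (real N * K) * (real n + 1) ^ N * s ^ n < 1) sequentially"
      by (rule order_tendstoD(2)) simp
    from eventually_conj[OF ev1 ev2] obtain M0 where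
      M0: "\<forall>n\<ge>M0. norm (f n) \<le> eps * norm (real n) \<and> (real N * K) * (real n + 1) ^ N * s ^ n < 1"
      unfolding eventually_sequentially by blast
    define n where "n = M0"
    have f1: "norm (f n) \<le> eps * real n" and f2: "(real N * K) * (real n + 1) ^ N * s ^ n < 1"
      using M0 unfolding n_def by auto
    have "C v0 n / lam ^ n = lam powr (f n)"
      unfolding C_def fe using lam0 by (simp add: powr_add powr_realpow)
    also have "\<dots> \<ge> lam powr (- eps * real n)"
      using f1 lam1 by (intro powr_mono) auto
    also have "lam powr (- eps * real n) = s ^ n"
    proof -
      have "lam powr (- eps * real n) = exp ((- eps * real n) * ln lam)"
        using lam0 by (simp add: powr_def)
      also have "(- eps * real n) * ln lam = real n * ln s"
        unfolding eps_def using lnlam by (simp add: field_simps)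
      also have "exp (real n * ln s) = exp (ln s) ^ n" by (rule exp_of_nat_mult)
      also have "\<dots> = s ^ n" using s by simp
      finally show ?thesis .
    qed
    finally have lo: "s ^ n \<le> C v0 n / lam ^ n" .
    have hi: "C v0 n / lam ^ n \<le> real N * b n" using Cerr[of n] r0 abs_ge_self[of "C v0 n / lam ^ n"] by linarith
    have "real N * b n = ((real N * K) * (real n + 1) ^ N * s ^ n) * s ^ n"
      unfolding b_def s(3)[symmetric] by (simp add: power_mult_distrib mult_ac)
    with lo hi have "s ^ n * 1 \<le> s ^ n * ((real N * K) * (real n + 1) ^ N * s ^ n)"
      by (simp add: mult_ac)
    hence "1 \<le> (real N * K) * (real n + 1) ^ N * s ^ n"
      using s by (subst (asm) mult_le_cancel_left_pos) auto
    with f2 show False by simp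
  qed
  define m where "m n = n - 2 * k n" for n
  have kle: "real (k n) \<le> ln (real n)" for n
  proof -
    have "ln (real n) \<ge> 0" by (cases n) auto
    thus ?thesis unfolding k_def by simp
  qed
  have klim: "filterlim k at_top sequentially"
    unfolding k_def
    by (rule filterlim_compose[OF filterlim_nat_sequentially filterlim_compose[OF
          filterlim_floor_sequentially filterlim_compose[OF ln_at_top filterlim_real_sequentially]]])
  have mlim: "filterlim m at_top sequentially"
  proof (rule nat_filterlim_from_real)
    show "filterlim (\<lambda>n. real n - 2 * ln (real n)) at_top sequentially" by real_asymp
    show "\<forall>\<^sub>F n in sequentially. real n - 2 * ln (real n) \<le> real (m n)"
    proof (intro always_eventually allI)
      fix n
      have "real n - 2 * ln (real n) \<le> real n - 2 * real (k n)" using kle[of n] by simp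
      also have "\<dots> \<le> real (m n)" unfolding m_def by (cases "2 * k n \<le> n") (auto simp: of_nat_diff)
      finally show "real n - 2 * ln (real n) \<le> real (m n)" .
    qed
  qed
  have m1: "eventually (\<lambda>n. 1 \<le> m n) sequentially"
    using mlim by (simp add: filterlim_at_top)
  define G where "G n a b = \<bar>u a * \<rho> b / (\<rho> v0 * lam ^ m n) - cn v0 (k n) a * C b (k n) / C v0 n\<bar>" for n a b
  define walkq where "walkq q = is_walk_from src tgt (src (hd q)) q" for q
  define \<phi> where "\<phi> q = (src (hd q), endv tgt (src (hd q)) q)" for q
  have claimA: "\<bar>markov_prob E src tgt \<pi> p q - lamt n q\<bar> = (if walkq q then G n (fst (\<phi> q)) (snd (\<phi> q)) else 0)"
    if mn: "1 \<le> m n" and qQ: "set q \<subseteq> E" "length q = m n" for n q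
  proof -
    have qne: "q \<noteq> []" using mn qQ by auto
    define a where "a = src (hd q)"
    have hdE: "hd q \<in> E" using qne qQ by auto
    have aN: "a < N" unfolding a_def using tgtN(2)[OF hdE] .
    have MP: "markov_prob E src tgt \<pi> p q = \<pi> a * markov_prob_from src tgt p a q"
    proof -
      obtain e r where qe: "q = e # r" using qne by (cases q) auto
      show ?thesis using qQ(1) unfolding markov_prob_def a_def qe by simp
    qed
    have nsplit: "n = k n + m n + k n" using mn unfolding m_def by simp
    have lt: "lamt n q = real (card {\<gamma> \<in> paths_from E src tgt v0 (k n + m n + k n).
                          take (m n) (drop (k n) \<gamma>) = q}) / C v0 n"
      unfolding lamt_def C_def m_def[symmetric] using nsplit by simp
    show ?thesis
    proof (cases "walkq q")
      case False
      have "markov_prob_from src tgt p a q = 0"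
        using False unfolding walkq_def a_def by (rule mpf_nonwalk)
      moreover have e0: "{\<gamma> \<in> paths_from E src tgt v0 (k n + m n + k n). take (m n) (drop (k n) \<gamma>) = q} = {}"
        using False unfolding walkq_def by (rule middle_count0[OF qne])
      have "lamt n q = 0" unfolding lt e0 by simp
      ultimately show ?thesis using False MP by simp
    next
      case True
      define bb where "bb = endv tgt a q"
      have wa: "is_walk_from src tgt a q" using True unfolding walkq_def a_def .
      have bN: "bb < N" unfolding bb_def by (rule endv_lt[OF g aN qQ(1)])
      have MP2: "markov_prob E src tgt \<pi> p q = u a * \<rho> bb / (\<rho> v0 * lam ^ m n)"
      proof (cases "\<rho> a = 0")
        case True
        have "\<rho> bb \<le> 0" using rho_walk[OF aN qQ(1) wa] True unfolding bb_def by simp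
        hence "\<rho> bb = 0" using rho_nn[OF bN] by simp
        thus ?thesis using MP True by (simp add: \<pi>_def)
      next
        case False
        have e: "markov_prob_from src tgt p a q * (lam ^ m n * \<rho> a) = \<rho> bb"
          using mpf[OF aN qQ(1) wa] qQ(2) unfolding bb_def by simp
        have mq: "markov_prob_from src tgt p a q = \<rho> bb / (lam ^ m n * \<rho> a)"
          using e False lam0 by (simp add: field_simps)
        have "markov_prob E src tgt \<pi> p q = u a * \<rho> a / \<rho> v0 * (\<rho> bb / (lam ^ m n * \<rho> a))"
          unfolding MP mq by (simp add: \<pi>_def)
        also have "\<dots> = u a * \<rho> bb / (\<rho> v0 * lam ^ m n)"
          using False lam0 rho0 by (simp add: field_simps)
        finally show ?thesis .
      qed
      have "card {\<gamma> \<in> paths_from E src tgt v0 (k n + m n + k n). take (m n) (drop (k n) \<gamma>) = q}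
          = cnt E src tgt v0 (k n) a * card (paths_from E src tgt bb (k n))"
        unfolding a_def bb_def by (rule middle_count[OF fin qne qQ(1,2) True[unfolded walkq_def]])
      hence lt2: "lamt n q = cn v0 (k n) a * C bb (k n) / C v0 n"
        unfolding lt cn_def C_def by simp
      show ?thesis using True unfolding MP2 lt2 G_def \<phi>_def a_def[symmetric] bb_def[symmetric] by simp
    qed
  qed
  have sumeq: "tv_dist {q. set q \<subseteq> E \<and> length q = n - 2 * k n} (markov_prob E src tgt \<pi> p) (lamt n)
      = 1/2 * (\<Sum>a<N. \<Sum>bb<N. cn a (m n) bb * G n a bb)" if mn: "1 \<le> m n" for n
  proof -
    define Q where "Q = {q. set q \<subseteq> E \<and> length q = m n}"
    define h where "h q = (if walkq q then G n (fst (\<phi> q)) (snd (\<phi> q)) else 0)" for q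
    have finQ: "finite Q" unfolding Q_def by (rule finite_lists_length_eq[OF fin])
    have "(\<Sum>q\<in>Q. \<bar>markov_prob E src tgt \<pi> p q - lamt n q\<bar>) = (\<Sum>q\<in>Q. h q)"
      by (rule sum.cong[OF refl]) (use claimA[OF mn] in \<open>auto simp: Q_def h_def\<close>)
    also have "\<dots> = (\<Sum>ab\<in>{..<N} \<times> {..<N}. \<Sum>q\<in>{q\<in>Q. \<phi> q = ab}. h q)"
    proof (rule sum.group[symmetric, OF finQ])
      show "\<phi> ` Q \<subseteq> {..<N} \<times> {..<N}"
      proof
        fix x assume "x \<in> \<phi> ` Q"
        then obtain q where qQ: "q \<in> Q" and x: "x = \<phi> q" by blast
        have qne: "q \<noteq> []" "set q \<subseteq> E" using qQ mn by (auto simp: Q_def)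
        have hdE: "hd q \<in> E" using qne by auto
        have aN: "src (hd q) < N" using tgtN(2)[OF hdE] .
        show "x \<in> {..<N} \<times> {..<N}" using x endv_lt[OF g aN qne(2)] aN by (simp add: \<phi>_def)
      qed
    qed simp
    also have "\<dots> = (\<Sum>ab\<in>{..<N} \<times> {..<N}. cn (fst ab) (m n) (snd ab) * G n (fst ab) (snd ab))"
    proof (rule sum.cong[OF refl])
      fix ab assume "ab \<in> {..<N} \<times> {..<N}"
      obtain a bb where ab: "ab = (a, bb)" by force
      have "(\<Sum>q\<in>{q\<in>Q. \<phi> q = ab}. h q) = (\<Sum>q\<in>{q\<in>{q\<in>Q. \<phi> q = ab}. walkq q}. G n a bb)"
        using finQ by (subst sum.inter_filter) (auto simp: h_def ab intro!: sum.cong)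
      also have "{q\<in>{q\<in>Q. \<phi> q = ab}. walkq q} = {\<alpha> \<in> paths_from E src tgt a (m n). endv tgt a \<alpha> = bb}"
      proof -
        have "q \<in> {q\<in>{q\<in>Q. \<phi> q = ab}. walkq q} \<longleftrightarrow> q \<in> {\<alpha> \<in> paths_from E src tgt a (m n). endv tgt a \<alpha> = bb}" for q
        proof
          assume "q \<in> {q\<in>{q\<in>Q. \<phi> q = ab}. walkq q}"
          thus "q \<in> {\<alpha> \<in> paths_from E src tgt a (m n). endv tgt a \<alpha> = bb}"
            by (auto simp: Q_def \<phi>_def ab walkq_def paths_from_def)
        next
          assume q: "q \<in> {\<alpha> \<in> paths_from E src tgt a (m n). endv tgt a \<alpha> = bb}"
          hence qne: "q \<noteq> []" using mn by (auto simp: paths_from_def)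
          have w: "is_walk_from src tgt a q" using q by (auto simp: paths_from_def)
          have "a = src (hd q)" by (rule walk_hd[OF w qne])
          thus "q \<in> {q\<in>{q\<in>Q. \<phi> q = ab}. walkq q}"
            using q w by (auto simp: Q_def \<phi>_def ab walkq_def paths_from_def)
        qed
        thus ?thesis by blast
      qed
      finally show "(\<Sum>q\<in>{q\<in>Q. \<phi> q = ab}. h q) = cn (fst ab) (m n) (snd ab) * G n (fst ab) (snd ab)"
        by (simp add: ab cnt_def cn_def)
    qed
    also have "\<dots> = (\<Sum>a<N. \<Sum>bb<N. cn a (m n) bb * G n a bb)"
      by (simp add: sum.cartesian_product')
    finally have "(\<Sum>q\<in>Q. \<bar>markov_prob E src tgt \<pi> p q - lamt n q\<bar>) = (\<Sum>a<N. \<Sum>bb<N. cn a (m n) bb * G n a bb)" .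
    thus ?thesis unfolding tv_dist_def Q_def m_def by simp
  qed
  define T where "T n a bb = (cn a (m n) bb / lam ^ m n) * \<bar>u a * \<rho> bb / \<rho> v0
      - (cn v0 (k n) a / lam ^ k n) * (C bb (k n) / lam ^ k n) / (C v0 n / lam ^ n)\<bar>" for n a bb
  have Cpos: "C v0 n > 0" for n
  proof -
    obtain f :: "nat \<Rightarrow> real" where
      fe: "\<And>n. real (card (paths_from E src tgt v0 n)) = lam powr (real n + f n)"
      using assms(13) unfolding large_growth_def by blast
    show ?thesis unfolding C_def fe using lam0 by simp
  qed
  have Teq: "cn a (m n) bb * G n a bb = T n a bb" if mn: "1 \<le> m n" for n a bb
  proof -
    have nsplit: "lam ^ n = lam ^ m n * lam ^ k n * lam ^ k n"
      using mn unfolding m_def by (simp add: power_add[symmetric])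
    define X where "X = u a * \<rho> bb"
    define Y where "Y = cn v0 (k n) a"
    define Z where "Z = C bb (k n)"
    define W where "W = X / (\<rho> v0 * lam ^ m n) - Y * Z / C v0 n"
    have lp: "lam ^ m n > 0" "lam ^ k n > 0" "lam ^ n > 0" using lam0 by auto
    have i1: "(Y / lam ^ k n) * (Z / lam ^ k n) / (C v0 n / lam ^ n) = lam ^ m n * (Y * Z / C v0 n)"
      using lp Cpos[of n] lam0 unfolding nsplit by (simp add: field_simps)
    have i2: "X / \<rho> v0 - lam ^ m n * (Y * Z / C v0 n) = lam ^ m n * W"
      unfolding W_def using rho0 lp lam0 by (simp add: field_simps)
    have "T n a bb = cn a (m n) bb / lam ^ m n * \<bar>lam ^ m n * W\<bar>"
      unfolding T_def X_def[symmetric] Y_def[symmetric] Z_def[symmetric] i1 i2 by simp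
    also have "\<dots> = cn a (m n) bb * \<bar>W\<bar>" using lp lam0 by (simp add: abs_mult)
    also have "\<dots> = cn a (m n) bb * G n a bb" unfolding G_def W_def X_def Y_def Z_def by simp
    finally show ?thesis by simp
  qed
  have Tlim: "(\<lambda>n. T n a bb) \<longlonglongrightarrow> 0" if a: "a < N" and bb: "bb < N" for a bb
  proof -
    have c1: "(\<lambda>n. cn a (m n) bb / lam ^ m n) \<longlonglongrightarrow> Lr a bb"
      by (rule filterlim_compose[OF conv[OF a bb] mlim])
    have c2: "(\<lambda>n. cn v0 (k n) a / lam ^ k n) \<longlonglongrightarrow> u a"
      by (rule filterlim_compose[OF uconv[OF a] klim])
    have c3: "(\<lambda>n. C bb (k n) / lam ^ k n) \<longlonglongrightarrow> \<rho> bb"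
      by (rule filterlim_compose[OF Cconv'[OF bb] klim])
    have c4: "(\<lambda>n. C v0 n / lam ^ n) \<longlonglongrightarrow> \<rho> v0" by (rule Cconv'[OF v0])
    have "(\<lambda>n. T n a bb) \<longlonglongrightarrow> Lr a bb * \<bar>u a * \<rho> bb / \<rho> v0 - u a * \<rho> bb / \<rho> v0\<bar>"
      unfolding T_def
      by (intro tendsto_mult[OF c1] tendsto_rabs tendsto_diff tendsto_const
          tendsto_divide[OF tendsto_mult[OF c2 c3] c4]) (use rho0 in auto)
    thus ?thesis by simp
  qed
  have "(\<lambda>n. 1/2 * (\<Sum>a<N. \<Sum>bb<N. T n a bb)) \<longlonglongrightarrow> 1/2 * (\<Sum>a<N. \<Sum>bb<N. (0::real))"
    by (intro tendsto_mult tendsto_const tendsto_sum Tlim) auto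
  hence lim0: "(\<lambda>n. 1/2 * (\<Sum>a<N. \<Sum>bb<N. T n a bb)) \<longlonglongrightarrow> 0" by simp
  show ?thesis
  proof (rule Lim_transform_eventually[OF lim0])
    show "\<forall>\<^sub>F n in sequentially. 1/2 * (\<Sum>a<N. \<Sum>bb<N. T n a bb) =
      tv_dist {q. set q \<subseteq> E \<and> length q = n - 2 * k n} (markov_prob E src tgt \<pi> p) (lamt n)"
      using m1
    proof eventually_elim
      case (elim n)
      show ?case unfolding sumeq[OF elim] using Teq[OF elim] by simp
    qed
  qed
qed

end
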